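(* Let $g\geq 3$, $d=2g+1$ and $h=\lfloor\log_2(g+1)+1\rfloor$. Let $r\geq 1$ and let $\mathbf k={}^t(k_1,\dots,k_d)\in\mathbf K_r$. Then $s(\mathbf k)\geq\lceil s(r)/h\rceil$. If moreover $s(\mathbf k)=s(r)/h$, then: 1) every entry $\dot k_{\ell,v}$ ($1\le\ell\le d$, $v\ge0$) of the $2$-adic box of $\mathbf k$ is $0$ or $1$; 2) exactly $s(r)/h$ of the entries $\dot k_{1,v}$ ($v\geq 0$) are equal to $1$ and the others are $0$; 3) for every $v\geq 0$, $s\big(\sum_{\ell=1}^d\dot k_{\ell,v}\big)$ equals $0$ or $h$.
   Context: For a nonnegative integer $m$, $s(m)$ is the sum of the binary digits of $m$. For $r\ge0$, $\mathbf K_r=\{{}^t(k_1,\dots,k_d)\in\mathbb Z^d: k_1\geq k_2\geq\cdots\geq k_d\geq 0,\ \sum_{\ell=1}^d k_\ell=r\}$. For $\mathbf k\in\mathbf K_r$ put $s(\mathbf k)=s(k_1-k_2)+s(k_2-k_3)+\cdots+s(k_{d-1}-k_d)+s(k_d)$. The dot representation (2-adic box) of $\mathbf k$ is the array of integers $\dot k_{\ell,v}$ ($1\le \ell\le d$, $v\ge 0$) defined by: $\dot k_{d,v}$ is the $2^v$-coefficient of the binary expansion of $k_d$; and for $1<\ell\le d$, $\dot k_{\ell-1,v}=\dot k_{\ell,v}+(\text{the }2^v\text{-coefficient of the binary expansion of }k_{\ell-1}-k_\ell)$. Then $k_\ell=\sum_v\dot k_{\ell,v}2^v$ and $s(\mathbf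 k)=\sum_v \dot k_{1,v}$. *)

theory Defs
  imports Complex_Main
begin

fun bin_digit_sum :: "nat \<Rightarrow> nat" where
  "bin_digit_sum n = (if n = 0 then 0 else n mod 2 + bin_digit_sum (n div 2))"

definition bin_digit :: "nat \<Rightarrow> nat \<Rightarrow> nat" where
  "bin_digit m v = (m div 2 ^ v) mod 2"

text \<open>Vectors k = (k_1,...,k_d) are functions nat => nat, only indices 1..d matter.
  K_r membership:\<close>
definition in_K :: "nat \<Rightarrow> nat \<Rightarrow> (nat \<Rightarrow> nat) \<Rightarrow> bool" where
  "in_K d r k \<longleftrightarrow> (\<forall>l\<in>{1..<d}. k (l + 1) \<le> k l) \<and> (\<Sum>l=1..d. k l) = r"

definition kdiff :: "nat \<Rightarrow> (nat \<Rightarrow> nat) \<Rightarrow> nat \<Rightarrow> nat" where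
  "kdiff d k l = (if l = d then k d else k l - k (l + 1))"

definition s_vec :: "nat \<Rightarrow> (nat \<Rightarrow> nat) \<Rightarrow> nat" where
  "s_vec d k = (\<Sum>l=1..d. bin_digit_sum (kdiff d k l))"

text \<open>Dot representation: dot_{d,v} = digit_v(k_d), dot_{l-1,v} = dot_{l,v} + digit_v(k_{l-1}-k_l);
  unfolding the recursion gives the sum below.\<close>
definition dot :: "nat \<Rightarrow> (nat \<Rightarrow> nat) \<Rightarrow> nat \<Rightarrow> nat \<Rightarrow> nat" where
  "dot d k l v = (\<Sum>j=l..d. bin_digit (kdiff d k j) v)"

end

theory Submission
  imports Defs
begin
declare bin_digit_sum.simps[simp del]
abbreviation sd where "sd \<equiv> bin_digit_sum"
lemma sd0[simp]: "sd 0 = 0" by (simp add: bin_digit_sum.simps)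
lemma sd_rec: "sd n = n mod 2 + sd (n div 2)"
  by (cases "n = 0") (simp_all add: bin_digit_sum.simps[of n])
lemma sd_double[simp]: "sd (2*n) = sd n" using sd_rec[of "2*n"] by simp
lemma sd_pow: "sd (2^v * n) = sd n" by (induction v) (auto simp: mult.assoc)
lemma sd_1[simp]: "sd 1 = 1" using sd_rec[of 1] by simp
lemma sd_Suc0[simp]: "sd (Suc 0) = 1" using sd_1 by simp
lemma sd_add_aux: "n = a + b \<Longrightarrow> sd (a + b) \<le> sd a + sd b"
proof (induction n arbitrary: a b rule: less_induct)
  case (less n)
  show ?case
  proof (cases "a = 0 \<or> b = 0")
    case True then show ?thesis by auto
  next
    case False
    define a' where "a' = a div 2" define b' where "b' = a div 2"
    have ea: "a = 2*(a div 2) + a mod 2" and eb: "b = 2*(b div 2) + b mod 2" by auto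
    have sa: "sd a = a mod 2 + sd (a div 2)" and sb: "sd b = b mod 2 + sd (b div 2)" using sd_rec by blast+
    have ih1: "sd (a div 2 + b div 2) \<le> sd (a div 2) + sd (b div 2)"
      using less.IH[of "a div 2 + b div 2" "a div 2" "b div 2"] less.prems False by fastforce
    show ?thesis
    proof (cases "a mod 2 = 1 \<and> b mod 2 = 1")
      case True
      have "a + b = 2 * (a div 2 + b div 2 + 1)" using ea eb True by simp
      hence "sd (a+b) = sd (a div 2 + b div 2 + 1)" by (metis sd_double)
      also have "\<dots> \<le> sd (a div 2 + b div 2) + sd 1"
      proof (rule less.IH[OF _ refl])
        show "a div 2 + b div 2 + 1 < n"
          using \<open>a + b = 2 * (a div 2 + b div 2 + 1)\<close> less.prems by simp
      qed
      finally show ?thesis using ih1 sa sb True by simp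
    next
      case F: False
      have m: "(a + b) mod 2 = a mod 2 + b mod 2" using F by presburger
      have d: "(a + b) div 2 = a div 2 + b div 2" using F by presburger
      have "sd (a+b) = (a mod 2 + b mod 2) + sd (a div 2 + b div 2)"
        using sd_rec[of "a+b"] m d by simp
      then show ?thesis using ih1 sa sb by simp
    qed
  qed
qed
lemma sd_add: "sd (a + b) \<le> sd a + sd b" using sd_add_aux by blast
lemma sd_bound: "n < 2^t \<Longrightarrow> sd n \<le> t"
proof (induction t arbitrary: n)
  case 0 then show ?case by simp
next
  case (Suc t)
  have "n div 2 < 2^t" using Suc.prems by auto
  then show ?case using Suc.IH[of "n div 2"] sd_rec[of n] by simp
qed
lemma sd_bound2: "n + 1 < 2^(t+1) \<Longrightarrow> sd n \<le> t"
proof (induction t arbitrary: n)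
  case 0 then show ?case by simp
next
  case (Suc t)
  show ?case
  proof (cases "n div 2 + 1 < 2^(t+1)")
    case True
    then show ?thesis using Suc.IH[of "n div 2"] sd_rec[of n] by simp
  next
    case False
    have "n div 2 < 2^(t+1)" using Suc.prems by auto
    hence "sd (n div 2) \<le> t+1" using sd_bound by blast
    moreover have "n mod 2 = 0"
    proof -
      obtain P where P: "P = (2::nat)^(t+1)" by simp
      have "Suc t + 1 = (t+1)+1" by simp
      hence "(2::nat)^(Suc t+1) = 2*P" using P by simp
      hence "n + 1 < 2*P" "\<not> n div 2 + 1 < P" using False Suc.prems P by auto
      thus ?thesis by presburger
    qed
    ultimately show ?thesis using sd_rec[of n] by simp
  qed
qed

lemma bin_digit_Suc: "bin_digit n (Suc v) = bin_digit (n div 2) v"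
  by (simp add: bin_digit_def div_mult2_eq)
lemma bin_digit_0: "bin_digit n 0 = n mod 2" by (simp add: bin_digit_def)
lemma bin_digit_le1: "bin_digit n v \<le> 1" by (simp add: bin_digit_def)
lemma bin_digit_big: "n < 2^N \<Longrightarrow> N \<le> v \<Longrightarrow> bin_digit n v = 0"
proof -
  assume a: "n < 2^N" "N \<le> v"
  have "(2::nat)^N \<le> 2^v" using a(2) by (simp add: power_increasing)
  hence "n < 2^v" using a(1) by linarith
  hence "n div 2^v = 0" by simp
  thus ?thesis by (simp add: bin_digit_def)
qed
lemma sd_digits: "n < 2^N \<Longrightarrow> sd n = (\<Sum>v<N. bin_digit n v)"
proof (induction N arbitrary: n)
  case 0 then show ?case by simp
next
  case (Suc N)
  have "n div 2 < 2^N" using Suc.prems by auto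
  then show ?case using Suc.IH[of "n div 2"] sd_rec[of n]
    by (simp add: sum.lessThan_Suc_shift bin_digit_Suc bin_digit_0 del: sum.lessThan_Suc)
qed
lemma val_digits: "n < 2^N \<Longrightarrow> n = (\<Sum>v<N. bin_digit n v * 2^v)"
proof (induction N arbitrary: n)
  case 0 then show ?case by simp
next
  case (Suc N)
  have "n div 2 < 2^N" using Suc.prems by auto
  hence "n div 2 = (\<Sum>v<N. bin_digit (n div 2) v * 2^v)" using Suc.IH by blast
  hence "2 * (n div 2) = 2 * (\<Sum>v<N. bin_digit (n div 2) v * 2^v)" by simp
  also have "\<dots> = (\<Sum>v<N. bin_digit n (Suc v) * 2^(Suc v))"
    by (simp add: bin_digit_Suc sum_distrib_left mult_ac)
  finally have "2 * (n div 2) = (\<Sum>v<N. bin_digit n (Suc v) * 2^(Suc v))" .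
  moreover have "n = n mod 2 + 2 * (n div 2)" by simp
  ultimately show ?case
    by (simp add: sum.lessThan_Suc_shift bin_digit_0 del: sum.lessThan_Suc)
qed
lemma sd_sum: "finite A \<Longrightarrow> sd (\<Sum>i\<in>A. f i) \<le> (\<Sum>i\<in>A. sd (f i))"
proof (induction A rule: finite_induct)
  case empty then show ?case by simp
next
  case (insert x F)
  then show ?case using sd_add[of "f x" "sum f F"] by simp
qed
lemma swap_sum: "(\<Sum>l=1..d. \<Sum>j=l..d. f j) = (\<Sum>j=1..d. j * (f j::nat))"
proof (induction d)
  case 0 then show ?case by simp
next
  case (Suc d)
  have "(\<Sum>l=1..Suc d. \<Sum>j=l..Suc d. f j) = (\<Sum>l=1..d. \<Sum>j=l..Suc d. f j) + f (Suc d)"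
    by simp
  also have "(\<Sum>l=1..d. \<Sum>j=l..Suc d. f j) = (\<Sum>l=1..d. (\<Sum>j=l..d. f j) + f (Suc d))"
    by (rule sum.cong) auto
  also have "\<dots> = (\<Sum>j=1..d. j * f j) + d * f (Suc d)"
    using Suc.IH by (simp add: sum.distrib)
  finally show ?case by simp
qed
lemma telescope:
  assumes mono: "\<forall>l\<in>{1..<d}. k (l + 1) \<le> (k l::nat)" and l: "1 \<le> l" "l \<le> d"
  shows "k l = (\<Sum>j=l..d. kdiff d k j)"
  using l(2)
proof (induction l rule: inc_induct)
  case base then show ?case by (simp add: kdiff_def)
next
  case (step n)
  have "(\<Sum>j=n..d. kdiff d k j) = kdiff d k n + (\<Sum>j=Suc n..d. kdiff d k j)"
    using step.hyps by (simp add: sum.atLeast_Suc_atMost)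
  moreover have "kdiff d k n = k n - k (n+1)" using step.hyps by (simp add: kdiff_def)
  moreover have "k (n+1) \<le> k n" using mono step.hyps l by auto
  ultimately show ?case using step.IH by simp
qed
lemma setA: "finite J \<Longrightarrow> J \<subseteq> {1..d} \<Longrightarrow> \<forall>j\<in>{1..d}. sd j \<le> h \<Longrightarrow> sd (\<Sum>J) \<le> h * card J"
proof (induction J rule: finite_induct)
  case empty then show ?case by simp
next
  case (insert x F)
  have "sd (\<Sum>(insert x F)) \<le> sd x + sd (\<Sum>F)" using insert.hyps sd_add by simp
  also have "\<dots> \<le> h + h * card F" using insert by (intro add_mono) auto
  finally show ?case using insert.hyps by simp
qed
lemma per_v:
  fixes e :: "nat \<Rightarrow> nat"
  assumes e: "\<forall>j. e j \<le> 1" and b1: "\<forall>j\<in>{1..d}. sd j \<le> h"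
    and b2: "\<forall>a\<in>{1..d}. \<forall>b\<in>{1..d}. sd (a + b) \<le> h + 1" and h: "h \<ge> 2"
  shows "sd (\<Sum>j=1..d. j * e j) \<le> h * (\<Sum>j=1..d. e j)"
    and "(\<Sum>j=1..d. e j) \<ge> 2 \<Longrightarrow> sd (\<Sum>j=1..d. j * e j) + 1 \<le> h * (\<Sum>j=1..d. e j)"
proof -
  define J where "J = {j\<in>{1..d}. e j = 1}"
  have fJ: "finite J" "J \<subseteq> {1..d}" unfolding J_def by auto
  have "(\<Sum>j=1..d. j * e j) = (\<Sum>j=1..d. if e j = 1 then j else 0)"
  proof (rule sum.cong)
    fix j show "j * e j = (if e j = 1 then j else 0)" using e[rule_format, of j] by (cases "e j") auto
  qed simp
  also have "\<dots> = (\<Sum>j\<in>J. j)" unfolding J_def by (rule sum.inter_filter[symmetric]) simp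
  finally have S: "(\<Sum>j=1..d. j * e j) = \<Sum>J" .
  have "(\<Sum>j=1..d. e j) = (\<Sum>j=1..d. if e j = 1 then 1 else 0)"
  proof (rule sum.cong)
    fix j show "e j = (if e j = 1 then 1 else 0)" using e[rule_format, of j] by (cases "e j") auto
  qed simp
  also have "\<dots> = (\<Sum>j\<in>J. 1)" unfolding J_def by (rule sum.inter_filter[symmetric]) simp
  also have "\<dots> = card J" by simp
  finally have M: "(\<Sum>j=1..d. e j) = card J" .
  show "sd (\<Sum>j=1..d. j * e j) \<le> h * (\<Sum>j=1..d. e j)"
    unfolding S M using setA fJ b1 by blast
  assume "(\<Sum>j=1..d. e j) \<ge> 2"
  hence c2: "card J \<ge> 2" using M by simp
  hence "J \<noteq> {}" by auto
  then obtain a where a: "a \<in> J" by blast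
  have "card (J - {a}) \<ge> 1" using c2 a fJ by simp
  hence "J - {a} \<noteq> {}" by (metis card.empty not_one_le_zero)
  then obtain b where b: "b \<in> J - {a}" by blast
  define R where "R = J - {a} - {b}"
  have "J = insert a (insert b R)" using a b unfolding R_def by auto
  moreover have "a \<notin> insert b R" "b \<notin> R" "finite R" using b fJ unfolding R_def by auto
  ultimately have SJ: "\<Sum>J = (a + b) + \<Sum>R" and CJ: "card J = card R + 2"
    by (simp_all add: add.assoc)
  have "sd (\<Sum>J) \<le> sd (a + b) + sd (\<Sum>R)" unfolding SJ by (rule sd_add)
  also have "\<dots> \<le> (h + 1) + h * card R"
    using b2 a b fJ \<open>finite R\<close> setA[of R d h] b1 unfolding R_def
    by (intro add_mono) auto
  finally show "sd (\<Sum>j=1..d. j * e j) + 1 \<le> h * (\<Sum>j=1..d. e j)"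
    unfolding S M CJ using h by (simp add: algebra_simps)
qed

lemma h_facts:
  fixes g h :: nat
  assumes "g \<ge> 3" and "h = nat \<lfloor>log 2 (real g + 1) + 1\<rfloor>"
  shows "g + 1 < 2^h" "2^h \<le> 2 * (g + 1)" "h \<ge> 3"
proof -
  obtain n0 where n0: "2^n0 \<le> g + 1" "g + 1 < (2::nat)^(n0+1)"
    using ex_power_ivl1[of 2 "g+1"] by auto
  have "floor (log (real 2) (real (g+1))) = int n0"
    by (rule floor_log_nat_eq_if) (use n0 in auto)
  hence "\<lfloor>log 2 (real g + 1)\<rfloor> = int n0" by (simp add: add.commute)
  hence "\<lfloor>log 2 (real g + 1) + 1\<rfloor> = int n0 + 1" by simp
  hence hn: "h = n0 + 1" using assms(2) by simp
  show "g + 1 < 2^h" using n0 hn by simp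
  show "2^h \<le> 2 * (g + 1)" using n0 hn by simp
  show "h \<ge> 3"
  proof (rule ccontr)
    assume "\<not> h \<ge> 3"
    hence "n0 + 1 \<le> 2" using hn by simp
    hence "(2::nat)^(n0+1) \<le> 2^2" by (intro power_increasing) auto
    thus False using n0 assms(1) by simp
  qed
qed

theorem lemma2p2:
  fixes g d h r :: nat and k :: "nat \<Rightarrow> nat"
  assumes "g \<ge> 3" and "d = 2 * g + 1"
    and "h = nat \<lfloor>log 2 (real g + 1) + 1\<rfloor>"
    and "r \<ge> 1" and "in_K d r k"
  shows "real_of_int \<lceil>real (bin_digit_sum r) / real h\<rceil> \<le> real (s_vec d k)
     \<and> (real (s_vec d k) = real (bin_digit_sum r) / real h \<longrightarrow> (
           (\<forall>l\<in>{1..d}. \<forall>v. dot d k l v = 0 \<or> dot d k l v = 1)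
         \<and> (finite {v. dot d k 1 v = 1}
            \<and> real (card {v. dot d k 1 v = 1}) = real (bin_digit_sum r) / real h
            \<and> (\<forall>v. dot d k 1 v \<noteq> 1 \<longrightarrow> dot d k 1 v = 0))
         \<and> (\<forall>v. bin_digit_sum (\<Sum>l=1..d. dot d k l v) = 0
                \<or> bin_digit_sum (\<Sum>l=1..d. dot d k l v) = h)))"
proof -
  have mono: "\<forall>l\<in>{1..<d}. k (l + 1) \<le> k l" and rsum: "(\<Sum>l=1..d. k l) = r"
    using assms(5) unfolding in_K_def by auto
  have hf: "g + 1 < 2^h" "2^h \<le> 2 * (g + 1)" "h \<ge> 3" using h_facts assms(1,3) by blast+
  have b1: "\<forall>j\<in>{1..d}. sd j \<le> h"
  proof
    fix j assume "j \<in> {1..d}"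
    hence "j + 1 < 2^(h+1)" using hf assms(2) by simp
    thus "sd j \<le> h" by (rule sd_bound2)
  qed
  have b2: "\<forall>a\<in>{1..d}. \<forall>b\<in>{1..d}. sd (a + b) \<le> h + 1"
  proof (intro ballI)
    fix a b assume "a \<in> {1..d}" "b \<in> {1..d}"
    hence "a + b + 1 < 2^(h+1+1)" using hf assms(2) by simp
    thus "sd (a + b) \<le> h + 1" by (rule sd_bound2)
  qed
  define N where "N = r"
  have kd_small: "kdiff d k j < 2^N" if "j \<in> {1..d}" for j
  proof -
    have "kdiff d k j \<le> k j" unfolding kdiff_def by auto
    also have "k j \<le> r" unfolding rsum[symmetric] using that by (intro member_le_sum) auto
    also have "r < 2^N" unfolding N_def by simp
    finally show ?thesis .
  qed
  define e where "e v j = bin_digit (kdiff d k j) v" for v j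
  define c where "c v = (\<Sum>l=1..d. dot d k l v)" for v
  define m where "m v = dot d k 1 v" for v
  have c_eq: "c v = (\<Sum>j=1..d. j * e v j)" for v
    unfolding c_def dot_def e_def by (rule swap_sum)
  have m_eq: "m v = (\<Sum>j=1..d. e v j)" for v
    unfolding m_def dot_def e_def by simp
  have e1: "\<forall>j. e v j \<le> 1" for v unfolding e_def using bin_digit_le1 by blast
  have pv1: "sd (c v) \<le> h * m v" for v
    unfolding c_eq m_eq using per_v(1)[OF e1 b1 b2] hf by simp
  have pv2: "m v \<ge> 2 \<Longrightarrow> sd (c v) + 1 \<le> h * m v" for v
    unfolding c_eq m_eq using per_v(2)[OF e1 b1 b2] hf by simp
  have big: "e v j = 0" if "N \<le> v" "j \<in> {1..d}" for v j
    unfolding e_def using bin_digit_big[OF kd_small[OF that(2)] that(1)] .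
  have mbig: "m v = 0" if "N \<le> v" for v
    unfolding m_eq using big[OF that] by simp
  have cbig: "c v = 0" if "N \<le> v" for v
    unfolding c_eq using big[OF that] by simp
  have "r = (\<Sum>l=1..d. \<Sum>j=l..d. kdiff d k j)"
    unfolding rsum[symmetric] by (rule sum.cong) (auto intro: telescope[OF mono])
  also have "\<dots> = (\<Sum>j=1..d. j * kdiff d k j)" by (rule swap_sum)
  also have "\<dots> = (\<Sum>j=1..d. j * (\<Sum>v<N. e v j * 2^v))"
  proof (rule sum.cong)
    fix j assume j: "j \<in> {1..d}"
    have X: "kdiff d k j = (\<Sum>v<N. e v j * 2^v)" unfolding e_def by (rule val_digits[OF kd_small[OF j]])
    show "j * kdiff d k j = j * (\<Sum>v<N. e v j * 2^v)" by (simp only: X[symmetric])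
  qed simp
  also have "\<dots> = (\<Sum>v<N. c v * 2^v)"
    unfolding c_eq by (simp add: sum_distrib_left sum_distrib_right mult_ac) (rule sum.swap)
  finally have r_eq: "r = (\<Sum>v<N. c v * 2^v)" .
  have sdr: "sd r \<le> (\<Sum>v<N. sd (c v))"
  proof -
    have "sd r \<le> (\<Sum>v<N. sd (c v * 2^v))" unfolding r_eq by (rule sd_sum) simp
    also have "\<dots> = (\<Sum>v<N. sd (c v))" using sd_pow by (simp add: mult.commute)
    finally show ?thesis .
  qed
  have svec: "s_vec d k = (\<Sum>v<N. m v)"
  proof -
    have "s_vec d k = (\<Sum>j=1..d. \<Sum>v<N. e v j)"
      unfolding s_vec_def e_def by (rule sum.cong) (simp_all add: sd_digits[OF kd_small])
    also have "\<dots> = (\<Sum>v<N. m v)" unfolding m_eq by (rule sum.swap)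
    finally show ?thesis .
  qed
  have main: "sd r \<le> h * s_vec d k"
  proof -
    have "sd r \<le> (\<Sum>v<N. sd (c v))" by (rule sdr)
    also have "\<dots> \<le> (\<Sum>v<N. h * m v)" by (intro sum_mono pv1)
    finally show ?thesis unfolding svec by (simp add: sum_distrib_left)
  qed
  have hpos: "real h > 0" using hf by simp
  have part1: "real_of_int \<lceil>real (sd r) / real h\<rceil> \<le> real (s_vec d k)"
  proof -
    have "real (sd r) \<le> real h * real (s_vec d k)" using main
      by (metis of_nat_le_iff of_nat_mult)
    hence "real (sd r) / real h \<le> real (s_vec d k)" using hpos
      by (simp add: divide_le_eq mult.commute)
    hence "\<lceil>real (sd r) / real h\<rceil> \<le> int (s_vec d k)"
      by (simp add: ceiling_le_iff)
    thus ?thesis by (metis of_int_le_iff of_int_of_nat_eq)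
  qed
  show ?thesis
  proof (intro conjI impI)
    show "real_of_int \<lceil>real (sd r) / real h\<rceil> \<le> real (s_vec d k)" by (rule part1)
  next
    assume eq: "real (s_vec d k) = real (sd r) / real h"
    hence "real (sd r) = real h * real (s_vec d k)" using hpos by (simp add: field_simps)
    hence eqn: "sd r = h * s_vec d k" by (metis of_nat_eq_iff of_nat_mult)
    have tight: "sd (c v) = h * m v \<and> m v \<le> 1" for v
    proof (cases "N \<le> v")
      case True then show ?thesis using mbig cbig by simp
    next
      case False
      hence vN: "v \<in> {..<N}" by simp
      show ?thesis
      proof (rule ccontr)
        assume "\<not> ?thesis"
        hence "sd (c v) < h * m v" using pv1[of v] pv2[of v] by fastforce
        hence "(\<Sum>v<N. sd (c v)) < (\<Sum>v<N. h * m v)"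
          using vN pv1 by (intro sum_strict_mono_ex1) auto
        hence "sd r < h * s_vec d k" using sdr unfolding svec by (simp add: sum_distrib_left)
        thus False using eqn by simp
      qed
    qed
    show "\<forall>l\<in>{1..d}. \<forall>v. dot d k l v = 0 \<or> dot d k l v = 1"
    proof (intro ballI allI)
      fix l v assume l: "l \<in> {1..d}"
      have "dot d k l v \<le> dot d k 1 v" unfolding dot_def using l
        by (intro sum_mono2) auto
      also have "\<dots> \<le> 1" using tight[of v] unfolding m_def by simp
      finally show "dot d k l v = 0 \<or> dot d k l v = 1" by auto
    qed
    have sub: "{v. dot d k 1 v = 1} \<subseteq> {..<N}"
    proof
      fix v assume "v \<in> {v. dot d k 1 v = 1}"
      hence "m v = 1" unfolding m_def by simp
      hence "\<not> N \<le> v" using mbig[of v] by auto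
      thus "v \<in> {..<N}" by simp
    qed
    show "finite {v. dot d k 1 v = 1}" using sub finite_subset by blast
    have "card {v. dot d k 1 v = 1} = (\<Sum>v\<in>{v. dot d k 1 v = 1}. 1)" by simp
    also have "\<dots> = (\<Sum>v<N. m v)"
    proof (rule sum.mono_neutral_cong_left)
      show "\<forall>i\<in>{..<N} - {v. dot d k 1 v = 1}. m i = 0"
      proof
        fix i assume "i \<in> {..<N} - {v. dot d k 1 v = 1}"
        hence "m i \<noteq> 1" unfolding m_def by simp
        moreover have "m i \<le> 1" using tight by blast
        ultimately show "m i = 0" by simp
      qed
    qed (use sub in \<open>auto simp: m_def\<close>)
    finally have "card {v. dot d k 1 v = 1} = s_vec d k" using svec by simp
    thus "real (card {v. dot d k 1 v = 1}) = real (sd r) / real h" using eq by simp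
    show "\<forall>v. dot d k 1 v \<noteq> 1 \<longrightarrow> dot d k 1 v = 0"
    proof (intro allI impI)
      fix v assume "dot d k 1 v \<noteq> 1"
      moreover have "dot d k 1 v \<le> 1" using tight[of v] unfolding m_def by blast
      ultimately show "dot d k 1 v = 0" by simp
    qed
    show "\<forall>v. sd (\<Sum>l=1..d. dot d k l v) = 0 \<or> sd (\<Sum>l=1..d. dot d k l v) = h"
    proof
      fix v
      have "sd (c v) = h * m v" "m v \<le> 1" using tight by auto
      hence "sd (c v) = 0 \<or> sd (c v) = h" by (cases "m v") auto
      thus "sd (\<Sum>l=1..d. dot d k l v) = 0 \<or> sd (\<Sum>l=1..d. dot d k l v) = h"
        unfolding c_def .
    qed
  qed
qed
end
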